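(* For every $\delta\in(0,\tfrac1{12})$ there exists a constant $\widetilde\gamma=\widetilde\gamma(\delta)<1$, depending only on $\delta$, such that for every $d,n\in\mathbb{N}$ and every convex hull $K$ of $n$ points $x_1,\dots,x_n\in[0,1]^d$, \[ \lambda_d\bigl(K_\delta\cap[0,1]^d\bigr)\le n(d+1)\,\widetilde\gamma^{\,d}. \]
   Context: For $A\subset\mathbb{R}^d$ and $\delta>0$, $A_\delta=\{x\in\mathbb{R}^d \mid \operatorname{dist}(x,A)\le \delta\sqrt{d}\}$, where $\operatorname{dist}(x,A)=\inf_{a\in A}\|x-a\|_2$; $\lambda_d$ is $d$-dimensional Lebesgue measure. *)

theory Defs
  imports "HOL-Analysis.Analysis"
begin

text \<open>Points of R^d are represented as extensional functions nat => real on {..<d}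
  (elements of PiE {..<d} (\<lambda>_. UNIV)), so that the dimension d can be quantified
  inside the statement.\<close>

definition Rd :: "nat \<Rightarrow> (nat \<Rightarrow> real) set" where
  "Rd d = PiE {..<d} (\<lambda>_. UNIV)"

definition unit_cube :: "nat \<Rightarrow> (nat \<Rightarrow> real) set" where
  "unit_cube d = PiE {..<d} (\<lambda>_. {0..1})"

definition dist_d :: "nat \<Rightarrow> (nat \<Rightarrow> real) \<Rightarrow> (nat \<Rightarrow> real) \<Rightarrow> real" where
  "dist_d d x y = sqrt (\<Sum>j<d. (x j - y j)^2)"

text \<open>dist(x,A) \<le> r, with dist(x,A) = inf over A (= +\<infinity> for empty A).\<close>
definition setdist_le :: "nat \<Rightarrow> (nat \<Rightarrow> real) \<Rightarrow> (nat \<Rightarrow> real) set \<Rightarrow> real \<Rightarrow> bool" where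
  "setdist_le d x A r \<longleftrightarrow> (\<forall>e>0. \<exists>a\<in>A. dist_d d x a < r + e)"

definition thicken :: "nat \<Rightarrow> real \<Rightarrow> (nat \<Rightarrow> real) set \<Rightarrow> (nat \<Rightarrow> real) set" where
  "thicken d \<delta> A = {x \<in> Rd d. setdist_le d x A (\<delta> * sqrt (real d))}"

definition conv_pts :: "nat \<Rightarrow> nat \<Rightarrow> (nat \<Rightarrow> nat \<Rightarrow> real) \<Rightarrow> (nat \<Rightarrow> real) set" where
  "conv_pts d n p = {restrict (\<lambda>j. \<Sum>i<n. w i * p i j) {..<d} | w.
      (\<forall>i<n. 0 \<le> w i) \<and> (\<Sum>i<n. w i) = 1}"

definition lebesgue_d :: "nat \<Rightarrow> (nat \<Rightarrow> real) measure" where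
  "lebesgue_d d = PiM {..<d} (\<lambda>_. lborel)"

end

theory Submission
  imports Defs
begin


lemma exp_quad: fixes y::real assumes "\<bar>y\<bar> \<le> 1" shows "exp y \<le> 1 + y + y^2"
proof (cases "0 \<le> y")
  case True then show ?thesis using exp_bound[of y] assms by auto
next
  case False
  define t where "t = -y"
  have t: "0 < t" using False t_def by auto
  have "1 + t \<le> exp t" by (rule exp_ge_add_one_self)
  hence "exp (-t) \<le> 1/(1+t)" using t by (simp add: exp_minus divide_simps) 
  also have "1/(1+t) \<le> 1 - t + t^2" using t by (simp add: divide_simps power2_eq_square algebra_simps)
  finally show ?thesis by (simp add: t_def)
qed

definition fb :: "real \<Rightarrow> real \<Rightarrow> real" where "fb b t = (t - b) * (t - 1/2)"
definition gam :: real where "gam = exp (1/144) * (143/144)"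
definition Fb :: "real \<Rightarrow> real \<Rightarrow> real" where "Fb b t = exp (1/144) * (1 - fb b t / 6 + 1/144)"

lemma fb_bound: "b \<in> {0..1} \<Longrightarrow> t \<in> {0..1} \<Longrightarrow> \<bar>fb b t\<bar> \<le> 1/2"
proof -
  assume "b \<in> {0..1}" "t \<in> {0..1}"
  hence "\<bar>t - b\<bar> \<le> 1" "\<bar>t - 1/2\<bar> \<le> 1/2" by (auto simp: abs_if)
  hence "\<bar>t - b\<bar> * \<bar>t - 1/2\<bar> \<le> 1 * (1/2)" by (intro mult_mono) auto
  thus ?thesis unfolding fb_def abs_mult by simp
qed

lemma Fb_nonneg: "b \<in> {0..1} \<Longrightarrow> t \<in> {0..1} \<Longrightarrow> 0 \<le> Fb b t"
  using fb_bound[of b t] unfolding Fb_def by (auto simp: abs_le_iff)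

lemma Fb_ge: assumes "b \<in> {0..1}" "t \<in> {0..1}" shows "exp (1/144 - fb b t / 6) \<le> Fb b t"
proof -
  have a: "\<bar>fb b t\<bar> \<le> 1/2" using fb_bound assms .
  have e: "exp (- (fb b t/6)) \<le> 1 - fb b t/6 + (fb b t/6)^2" using exp_quad[of "-(fb b t/6)"] a by auto
  have "(fb b t/6)^2 \<le> 1/144"
  proof -
    have "\<bar>fb b t/6\<bar> \<le> 1/12" using a by auto
    hence "\<bar>fb b t/6\<bar>^2 \<le> (1/12)^2" by (intro power_mono) auto
    thus ?thesis by (simp add: power2_abs power_divide)
  qed
  with e have "exp (- (fb b t/6)) \<le> 1 - fb b t / 6 + 1/144" by linarith
  hence "exp (1/144) * exp (- (fb b t/6)) \<le> exp (1/144) * (1 - fb b t / 6 + 1/144)" by simp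
  moreover have "exp (1/144 - fb b t / 6) = exp (1/144) * exp (- (fb b t/6))"
    by (simp add: exp_add[symmetric])
  ultimately show ?thesis unfolding Fb_def by simp
qed

lemma Fb_integral: "(Fb b has_integral gam) {0..1}"
proof -
  define G where "G x = exp (1/144) * ((145/144)*x - (x^3/3 - (b+1/2)*x^2/2 + b*x/2)/6)" for x
  have "(Fb b has_integral (G 1 - G 0)) {0..1}"
    apply (rule fundamental_theorem_of_calculus)
    apply simp
    unfolding G_def Fb_def fb_def
    apply (rule has_real_derivative_iff_has_vector_derivative[THEN iffD1])
    apply (auto intro!: derivative_eq_intros)
    apply (simp add: algebra_simps power2_eq_square divide_simps)
    done
  moreover have "G 1 - G 0 = gam" unfolding G_def gam_def by (simp add: algebra_simps)
  ultimately show ?thesis by simp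
qed

lemma B_sets: "{x \<in> unit_cube d. (\<Sum>j<d. fb (b j) (x j)) \<le> real d / 24} \<in> sets (lebesgue_d d)"
proof -
  have c: "unit_cube d \<in> sets (lebesgue_d d)" unfolding unit_cube_def lebesgue_d_def
    by (rule sets_PiM_I_finite) auto
  have s: "{x \<in> space (lebesgue_d d). (\<Sum>j<d. fb (b j) (x j)) \<le> real d / 24} \<in> sets (lebesgue_d d)"
    unfolding lebesgue_d_def fb_def by measurable
  have sub: "unit_cube d \<subseteq> space (lebesgue_d d)" unfolding unit_cube_def lebesgue_d_def space_PiM
    by (auto simp: PiE_def Pi_def)
  have "{x \<in> unit_cube d. (\<Sum>j<d. fb (b j) (x j)) \<le> real d / 24} = unit_cube d \<inter> {x \<in> space (lebesgue_d d). (\<Sum>j<d. fb (b j) (x j)) \<le> real d / 24}"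
    using sub by auto
  thus ?thesis using c s by auto
qed

lemma B_emeasure:
  assumes b: "\<And>j. j < d \<Longrightarrow> b j \<in> {0..1}"
  shows "emeasure (lebesgue_d d) {x \<in> unit_cube d. (\<Sum>j<d. fb (b j) (x j)) \<le> real d / 24} \<le> ennreal (gam ^ d)"
proof -
  define B where "B = {x \<in> unit_cube d. (\<Sum>j<d. fb (b j) (x j)) \<le> real d / 24}"
  interpret product_sigma_finite "\<lambda>_::nat. lborel :: real measure" by standard
  define F where "F j t = ennreal (Fb (b j) t) * indicator {0..1::real} t" for j t
  have Fm: "F j \<in> borel_measurable lborel" for j unfolding F_def Fb_def fb_def by measurable
  have F1: "integral\<^sup>N lborel (F j) = ennreal gam" if "j < d" for j
    unfolding F_def
    by (rule nn_integral_has_integral_lebesgue'[OF _ Fb_integral]) (use Fb_nonneg b that in auto)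
  have "emeasure (lebesgue_d d) B = (\<integral>\<^sup>+ x. indicator B x \<partial>lebesgue_d d)"
    using B_sets[of d b] unfolding B_def by simp
  also have "\<dots> \<le> (\<integral>\<^sup>+ x. (\<Prod>j\<in>{..<d}. F j (x j)) \<partial>lebesgue_d d)"
  proof (rule nn_integral_mono)
    fix x assume "x \<in> space (lebesgue_d d)"
    show "indicator B x \<le> (\<Prod>j\<in>{..<d}. F j (x j))"
    proof (cases "x \<in> B")
      case False then show ?thesis by simp
    next
      case True
      hence xc: "\<And>j. j < d \<Longrightarrow> x j \<in> {0..1}" and sm: "(\<Sum>j<d. fb (b j) (x j)) \<le> real d / 24"
        unfolding B_def unit_cube_def by (auto simp: PiE_def Pi_def)
      have "(\<Prod>j\<in>{..<d}. F j (x j)) = ennreal (\<Prod>j\<in>{..<d}. Fb (b j) (x j))"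
        unfolding F_def using xc b by (auto simp: prod_ennreal Fb_nonneg intro!: prod_ennreal)
      moreover have "1 \<le> (\<Prod>j\<in>{..<d}. Fb (b j) (x j))"
      proof -
        have "1 \<le> exp (\<Sum>j<d. 1/144 - fb (b j) (x j) / 6)"
          using sm by (simp add: sum_subtractf sum_divide_distrib[symmetric])
        also have "\<dots> = (\<Prod>j\<in>{..<d}. exp (1/144 - fb (b j) (x j) / 6))" by (rule exp_sum) simp
        also have "\<dots> \<le> (\<Prod>j\<in>{..<d}. Fb (b j) (x j))"
          by (rule prod_mono) (use xc b Fb_ge in auto)
        finally show ?thesis .
      qed
      ultimately show ?thesis using True by simp
    qed
  qed
  also have "\<dots> = (\<Prod>j\<in>{..<d}. integral\<^sup>N lborel (F j))"
    unfolding lebesgue_d_def by (rule product_nn_integral_prod) (use Fm[unfolded measurable_lborel1] in auto)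
  also have "\<dots> = ennreal (gam ^ d)"
    using F1 by (simp add: prod_ennreal gam_def ennreal_power[symmetric])
  finally show ?thesis unfolding B_def .
qed


lemma cover:
  assumes d1: "0 < \<delta>" and d2: "\<delta> < 1/12"
    and x: "x \<in> thicken d \<delta> (conv_pts d n p) \<inter> unit_cube d"
  shows "\<exists>i<n. x \<in> {x \<in> unit_cube d. (\<Sum>j<d. fb (p i j) (x j)) \<le> real d / 24}"
proof -
  have xc: "x \<in> unit_cube d" using x by auto
  hence xj: "\<And>j. j < d \<Longrightarrow> x j \<in> {0..1}" unfolding unit_cube_def by (auto simp: PiE_def Pi_def)
  have sd: "setdist_le d x (conv_pts d n p) (\<delta> * sqrt (real d))" using x unfolding thicken_def by auto
  define e where "e = (1/12 - \<delta>) * sqrt (real d) + (if d = 0 then 1 else 0)"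
  have e0: "e > 0" using d2 unfolding e_def by (cases "d = 0") auto
  obtain a where a: "a \<in> conv_pts d n p" and da: "dist_d d x a < \<delta> * sqrt (real d) + e"
    using sd e0 unfolding setdist_le_def by blast
  obtain w where a_def: "a = restrict (\<lambda>j. \<Sum>i<n. w i * p i j) {..<d}"
    and w0: "\<forall>i<n. 0 \<le> w i" and w1: "(\<Sum>i<n. w i) = 1"
    using a unfolding conv_pts_def by blast
  define S where "S = (\<Sum>j<d. (x j - a j) * (x j - 1/2))"
  have S_le: "S \<le> real d / 24"
  proof (cases "d = 0")
    case True then show ?thesis unfolding S_def by simp
  next
    case False
    have dd: "dist_d d x a \<le> sqrt (real d) / 12" using da False unfolding e_def by (simp add: algebra_simps)
    have h1: "S \<le> L2_set (\<lambda>j. x j - a j) {..<d} * L2_set (\<lambda>j. x j - 1/2) {..<d}"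
    proof -
      have "S \<le> (\<Sum>j<d. \<bar>x j - a j\<bar> * \<bar>x j - 1/2\<bar>)" unfolding S_def
        by (rule sum_mono) (simp add: abs_mult[symmetric])
      also have "\<dots> \<le> L2_set (\<lambda>j. x j - a j) {..<d} * L2_set (\<lambda>j. x j - 1/2) {..<d}"
        by (rule L2_set_mult_ineq)
      finally show ?thesis .
    qed
    have h2: "L2_set (\<lambda>j. x j - a j) {..<d} = dist_d d x a" unfolding L2_set_def dist_d_def ..
    have h3: "L2_set (\<lambda>j. x j - 1/2) {..<d} \<le> sqrt (real d) / 2"
    proof -
      have "(\<Sum>j<d. (x j - 1/2)^2) \<le> (\<Sum>j<d. 1/4)"
      proof (rule sum_mono)
        fix j assume "j \<in> {..<d}"
        hence "\<bar>x j - 1/2\<bar> \<le> 1/2" using xj by (auto simp: abs_if)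
        hence "\<bar>x j - 1/2\<bar>^2 \<le> (1/2)^2" by (intro power_mono) auto
        thus "(x j - 1/2)^2 \<le> 1/4" by (simp add: power2_abs power_divide)
      qed
      hence "L2_set (\<lambda>j. x j - 1/2) {..<d} \<le> sqrt (real d / 4)"
        unfolding L2_set_def by (intro real_sqrt_le_mono) simp
      also have "sqrt (real d / 4) = sqrt (real d) / 2" by (simp add: real_sqrt_divide)
      finally show ?thesis .
    qed
    have h4: "0 \<le> dist_d d x a" unfolding dist_d_def by (simp add: sum_nonneg)
    have h5: "0 \<le> L2_set (\<lambda>j. x j - 1/2) {..<d}" unfolding L2_set_def by (simp add: sum_nonneg)
    have "S \<le> (sqrt (real d) / 12) * (sqrt (real d) / 2)"
      using h1 mult_mono[OF dd h3 _ h5] h2 h4 by simp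
    also have "\<dots> = real d / 24" by simp
    finally show ?thesis .
  qed
  define G where "G i = (\<Sum>j<d. fb (p i j) (x j))" for i
  have SG: "S = (\<Sum>i<n. w i * G i)"
  proof -
    have "(\<Sum>i<n. w i * G i) = (\<Sum>j<d. \<Sum>i<n. w i * ((x j - p i j) * (x j - 1/2)))"
      unfolding G_def fb_def by (simp add: sum_distrib_left sum.swap[of _ "{..<n}"])
    also have "\<dots> = (\<Sum>j<d. (x j - a j) * (x j - 1/2))"
    proof (rule sum.cong[OF refl])
      fix j assume j: "j \<in> {..<d}"
      have "(\<Sum>i<n. w i * ((x j - p i j) * (x j - 1/2))) = ((\<Sum>i<n. w i) * x j - (\<Sum>i<n. w i * p i j)) * (x j - 1/2)"
      proof -
        have "(\<Sum>i<n. w i * ((x j - p i j) * (x j - 1/2))) = (\<Sum>i<n. (w i * x j - w i * p i j) * (x j - 1/2))"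
          by (rule sum.cong) (simp_all add: algebra_simps)
        also have "\<dots> = (\<Sum>i<n. w i * x j - w i * p i j) * (x j - 1/2)" by (simp add: sum_distrib_right)
        also have "(\<Sum>i<n. w i * x j - w i * p i j) = (\<Sum>i<n. w i) * x j - (\<Sum>i<n. w i * p i j)"
          by (simp add: sum_subtractf sum_distrib_right)
        finally show ?thesis .
      qed
      also have "\<dots> = (x j - a j) * (x j - 1/2)" using j w1 unfolding a_def by simp
      finally show "(\<Sum>i<n. w i * ((x j - p i j) * (x j - 1/2))) = (x j - a j) * (x j - 1/2)" .
    qed
    finally show ?thesis unfolding S_def ..
  qed
  show ?thesis
  proof (rule ccontr)
    assume "\<not> ?thesis"
    hence Gi: "\<And>i. i < n \<Longrightarrow> G i > real d / 24" using xc unfolding G_def by fastforce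
    obtain k where k: "k < n" "w k > 0"
    proof -
      have "\<exists>k<n. w k > 0"
      proof (rule ccontr)
        assume "\<not> ?thesis" hence "\<forall>i<n. w i \<le> 0" by auto
        hence "(\<Sum>i<n. w i) \<le> 0" by (intro sum_nonpos) auto
        with w1 show False by simp
      qed
      thus ?thesis using that by blast
    qed
    have "w k * (G k - real d / 24) \<le> (\<Sum>i<n. w i * (G i - real d / 24))"
      by (rule member_le_sum[where f = "\<lambda>i. w i * (G i - real d / 24)"]) (use k Gi w0 in \<open>auto intro!: mult_nonneg_nonneg simp: less_imp_le\<close>)
    moreover have "0 < w k * (G k - real d / 24)" using k Gi by auto
    moreover have "(\<Sum>i<n. w i * (G i - real d / 24)) = S - real d / 24"
    proof -
      have "(\<Sum>i<n. w i * (G i - real d / 24)) = (\<Sum>i<n. w i * G i) - (\<Sum>i<n. w i) * (real d / 24)"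
        by (simp add: right_diff_distrib sum_subtractf sum_distrib_right)
      thus ?thesis using SG w1 by simp
    qed
    ultimately show False using S_le by linarith
  qed
qed

theorem theorem2p3:
  fixes \<delta> :: real
  assumes "0 < \<delta>" and "\<delta> < 1/12"
  shows "\<exists>\<gamma>::real. 0 < \<gamma> \<and> \<gamma> < 1 \<and>
    (\<forall>(d::nat) (n::nat) (p::nat \<Rightarrow> nat \<Rightarrow> real).
       (\<forall>i<n. p i \<in> unit_cube d) \<longrightarrow>
       measure (lebesgue_d d) (thicken d \<delta> (conv_pts d n p) \<inter> unit_cube d)
         \<le> real n * (real d + 1) * \<gamma> ^ d)"
proof (intro exI conjI allI impI)
  show "0 < gam" unfolding gam_def by simp
  show "gam < 1"
  proof -
    have "exp (1/144::real) \<le> 1 + 1/144 + (1/144)^2" by (rule exp_bound) auto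
    hence "gam \<le> (1 + 1/144 + (1/144)^2) * (143/144)" unfolding gam_def by simp
    also have "\<dots> < 1" by (simp add: power2_eq_square)
    finally show ?thesis .
  qed
  fix d n :: nat and p :: "nat \<Rightarrow> nat \<Rightarrow> real"
  assume p: "\<forall>i<n. p i \<in> unit_cube d"
  define A where "A = thicken d \<delta> (conv_pts d n p) \<inter> unit_cube d"
  define B where "B i = {x \<in> unit_cube d. (\<Sum>j<d. fb (p i j) (x j)) \<le> real d / 24}" for i
  have g0: "0 \<le> gam" unfolding gam_def by simp
  have "measure (lebesgue_d d) A \<le> real n * gam ^ d"
  proof (cases "A \<in> sets (lebesgue_d d)")
    case False then show ?thesis by (simp add: measure_notin_sets g0)
  next
    case True
    have sub: "A \<subseteq> (\<Union>i\<in>{..<n}. B i)" using cover[OF assms] unfolding A_def B_def by blast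
    have Bs: "B i \<in> sets (lebesgue_d d)" for i unfolding B_def by (rule B_sets)
    have Bm: "emeasure (lebesgue_d d) (B i) \<le> ennreal (gam ^ d)" if "i < n" for i
    proof -
      have "\<And>j. j < d \<Longrightarrow> p i j \<in> {0..1}" using p that unfolding unit_cube_def by (auto simp: PiE_def Pi_def)
      thus ?thesis unfolding B_def by (rule B_emeasure)
    qed
    have "emeasure (lebesgue_d d) A \<le> emeasure (lebesgue_d d) (\<Union>i\<in>{..<n}. B i)"
      by (rule emeasure_mono[OF sub]) (use Bs in auto)
    also have "\<dots> \<le> (\<Sum>i<n. emeasure (lebesgue_d d) (B i))"
      by (rule emeasure_subadditive_finite) (use Bs in auto)
    also have "\<dots> \<le> (\<Sum>i<n. ennreal (gam ^ d))" by (rule sum_mono) (use Bm in auto)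
    also have "\<dots> = ennreal (real n * gam ^ d)" using g0 by (simp add: ennreal_of_nat_eq_real_of_nat ennreal_mult)
    finally have "emeasure (lebesgue_d d) A \<le> ennreal (real n * gam ^ d)" .
    thus ?thesis unfolding measure_def using g0 by (simp add: enn2real_leI)
  qed
  also have "real n * gam ^ d \<le> real n * (real d + 1) * gam ^ d"
  proof -
    have "real n * 1 \<le> real n * (real d + 1)" by (intro mult_left_mono) auto
    thus ?thesis using g0 by (intro mult_right_mono) auto
  qed
  finally show "measure (lebesgue_d d) (thicken d \<delta> (conv_pts d n p) \<inter> unit_cube d)
         \<le> real n * (real d + 1) * gam ^ d" unfolding A_def .
qed

end
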